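(* Let $N\ge4$ be even. Then: (i) for every $k$ with $1\le k\le N/2-1$, $\mathrm{scale}_N[k]\cdot\mathrm{scale}_N[N/2-k]=\mathrm{GenScale}[N]$ (i.e. the list of scales equals the reversed list of $\mathrm{GenScale}[N]$ divided by the scales), and the $\mathbb{Q}$-span of the scales $\{\mathrm{scale}_N[k]:1\le k\le N/2-1\}$ has dimension at most $N/4$; (ii) if $N\equiv 2\pmod 4$, the dimension of that $\mathbb{Q}$-span is at most $\lfloor N/4\rfloor$, and the even-indexed and odd-indexed scales determine each other via $\mathrm{scale}_N[2m]=\mathrm{GenScale}[N]/\mathrm{scale}_N[N/2-2m]$ (with $N/2-2m$ odd); (iii) if $4\mid N$, then $\mathrm{scale}_N[N/4]=\sqrt{\mathrm{GenScale}[N]}$, and the scales with indices $k>N/4$ are obtained from those with $k<N/4$ as $\mathrm{GenScale}[N]/\mathrm{scale}_N[k]$; (iv) if $N\ge6$, then $\mathrm{ScaleSwap}[N,N/2]=\mathrm{scale}_N[2]$ and for every $k$ with $1\le k<N/4$, $\mathrm{scale}_{N/2}[k]=\mathrm{scale}_N[2k]/\mathrm{ScaleSwap}[N,N/2]$.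
   Context: For an integer $n\ge3$ and $1\le k<n/2$, $\mathrm{scale}_n[k]=\tan(\pi/n)/\tan(k\pi/n)$. $\langle n/2\rangle$ is the greatest integer strictly less than $n/2$ and $\mathrm{GenScale}[n]=\mathrm{scale}_n[\langle n/2\rangle]$ (so for $n$ even, $\mathrm{GenScale}[n]=\mathrm{scale}_n[n/2-1]$). $\mathrm{ScaleSwap}[n,m]=\tan(\pi/n)/\tan(\pi/m)$. *)

theory Defs
  imports Complex_Main
begin

definition scale :: "nat \<Rightarrow> nat \<Rightarrow> real" where
  "scale n k = tan (pi / real n) / tan (real k * pi / real n)"

text \<open>greatest integer strictly less than n/2 is (n-1) div 2 (for n \<ge> 1)\<close>
definition GenScale :: "nat \<Rightarrow> real" where
  "GenScale n = scale n ((n - 1) div 2)"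

definition ScaleSwap :: "nat \<Rightarrow> nat \<Rightarrow> real" where
  "ScaleSwap n m = tan (pi / real n) / tan (pi / real m)"

definition qscale :: "rat \<Rightarrow> real \<Rightarrow> real" where
  "qscale q x = real_of_rat q * x"

definition qdim :: "real set \<Rightarrow> nat" where
  "qdim S = Vector_Spaces.vector_space.dim qscale S"

end

theory Submission
  imports Defs
begin


interpretation Q: vector_space qscale
  by unfold_locales (auto simp: qscale_def algebra_simps of_rat_add of_rat_mult)

lemma qdim_eq: "qdim S = Q.dim S" by (simp add: qdim_def)

lemma mult_hom: "module_hom qscale qscale (\<lambda>v. w * v)"
  by unfold_locales (auto simp: qscale_def algebra_simps)

lemma inverse_in_span:
  fixes G :: "real set" and w :: real
  assumes fin: "finite G" and one: "1 \<in> Q.span G"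
    and cl: "\<And>v. v \<in> Q.span G \<Longrightarrow> w * v \<in> Q.span G"
    and wW: "w \<in> Q.span G" and w0: "w \<noteq> 0"
  shows "inverse w \<in> Q.span G"
proof -
  let ?W = "Q.span G"
  obtain B where B: "B \<subseteq> ?W" "Q.independent B" "?W \<subseteq> Q.span B" "card B = Q.dim ?W"
    using Q.basis_exists by blast
  have finB: "finite B" using Q.independent_span_bound[OF fin B(2) B(1)] by blast
  have injf: "inj_on (\<lambda>v. w * v) X" for X using w0 by (auto simp: inj_on_def)
  define C where "C = (\<lambda>v. w * v) ` B"
  have indC: "Q.independent C"
    unfolding C_def by (rule module_hom.independent_injective_image[OF mult_hom B(2) injf])
  have cardC: "card C = card B" unfolding C_def by (rule card_image[OF injf])
  have CW: "C \<subseteq> ?W" using B(1) cl unfolding C_def by auto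
  have "1 \<in> Q.span C"
  proof (rule ccontr)
    assume n: "1 \<notin> Q.span C"
    have ind: "Q.independent (insert 1 C)" by (rule Q.independent_insertI[OF n indC])
    have "insert 1 C \<subseteq> Q.span B" using CW one B(3) by auto
    from Q.independent_span_bound[OF finB ind this]
    have "card (insert 1 C) \<le> card B" by blast
    moreover have "1 \<notin> C" using n Q.span_base by blast
    moreover have "finite C" using finB C_def by simp
    ultimately show False using cardC by simp
  qed
  then have "1 \<in> (\<lambda>v. w * v) ` Q.span B"
    unfolding C_def using module_hom.span_image[OF mult_hom[of w], of B] by simp
  then obtain v where v: "v \<in> Q.span B" "1 = w * v" by auto
  have "v \<in> ?W" using v(1) Q.span_minimal[OF B(1) Q.subspace_span] by auto
  moreover have "inverse w = v" using v(2) w0 by (simp add: field_simps)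
  ultimately show ?thesis by simp
qed



lemma dim_bound:
  fixes N :: nat
  assumes N4: "N \<ge> 4" and ev: "even N"
  shows "qdim {scale N k | k. 1 \<le> k \<and> k \<le> N div 2 - 1} \<le> N div 4"
proof -
  define n where "n = N div 2"
  define d where "d = N div 4"
  define e where "e = n mod 2"
  have nde: "n = 2*d + e" unfolding n_def d_def e_def using ev by auto
  have e01: "e = 0 \<or> e = 1" unfolding e_def by auto
  have d1: "d \<ge> 1" using N4 unfolding d_def by auto
  have Nn: "real N = 2 * real n" using ev unfolding n_def by auto
  define \<theta> where "\<theta> = pi / real N"
  have th0: "0 < \<theta>" unfolding \<theta>_def using N4 by auto
  have nth: "real n * \<theta> = pi/2" unfolding \<theta>_def using Nn N4 by (simp add: field_simps)
  have th4: "\<theta> \<le> pi/4" unfolding \<theta>_def using N4 by (simp add: field_simps)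
  define c where "c = cos (2*\<theta>)"
  define h where "h j = cos ((2 * real j + real e) * \<theta>)" for j :: nat
  define g where "g j = h j / h 0" for j
  define G where "G = g ` {..<d}"
  define W where "W = Q.span G"
  have finG: "finite G" unfolding G_def by simp
  have cardG: "card G \<le> d" unfolding G_def using card_image_le[of "{..<d}" g] by simp
  have hd: "h d = 0"
  proof -
    have "(2 * real d + real e) * \<theta> = real n * \<theta>" using nde by simp
    then have "(2 * real d + real e) * \<theta> = pi/2" using nth by simp
    then have "h d = cos (pi/2)" unfolding h_def by (rule arg_cong[where f=cos])
    then show ?thesis by simp
  qed
  have h0: "h 0 > 0"
  proof -
    have "real e * \<theta> < pi/2" using e01 th4 th0 by auto
    moreover have "0 \<le> real e * \<theta>" using th0 by simp
    moreover have "- (pi/2) < 0" using pi_gt_zero by simp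
    ultimately show ?thesis unfolding h_def by (simp add: cos_gt_zero_pi)
  qed
  have gW: "g j \<in> W" if "j \<le> d" for j
  proof (cases "j = d")
    case True then show ?thesis unfolding W_def g_def using hd Q.span_zero by simp
  next
    case False then show ?thesis using that unfolding W_def G_def by (intro Q.span_base) auto
  qed
  have hrec: "c * h (j+1) = (h (j+2) + h j) / 2" for j
  proof -
    have "c * h (j+1) = (cos ((2 * real (j+1) + real e) * \<theta> - 2*\<theta>) + cos (2*\<theta> + (2 * real (j+1) + real e) * \<theta>))/2"
      unfolding c_def h_def by (simp add: cos_times_cos mult.commute) (metis cos_minus minus_diff_eq)
    also have "\<dots> = (h (j+2) + h j) / 2" unfolding h_def by (simp add: algebra_simps)
    finally show ?thesis .
  qed
  have hrec0: "c * h 0 = (h 1 + h (1 - e)) / 2"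
  proof -
    have "c * h 0 = (cos (2*\<theta> - real e * \<theta>) + cos (2*\<theta> + real e * \<theta>))/2"
      unfolding c_def h_def by (simp add: cos_times_cos)
    also have "\<dots> = (h 1 + h (1 - e)) / 2" unfolding h_def using e01 by (auto simp: algebra_simps)
    finally show ?thesis .
  qed
  have grec: "c * g (j+1) = (g (j+2) + g j) / 2" for j
    unfolding g_def using hrec[of j] h0 by (simp add: field_simps)
  have grec0: "c * g 0 = (g 1 + g (1 - e)) / 2"
    unfolding g_def using hrec0 h0 by (simp add: field_simps)
  have g0: "g 0 = 1" unfolding g_def using h0 by simp
  have sub_c: "Q.subspace {v. c * v \<in> W}"
  proof (rule Q.subspaceI)
    show "0 \<in> {v. c * v \<in> W}" unfolding W_def by (simp add: Q.span_zero)
    show "x + y \<in> {v. c * v \<in> W}" if "x \<in> {v. c * v \<in> W}" "y \<in> {v. c * v \<in> W}" for x y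
      using that unfolding W_def by (simp add: distrib_left Q.span_add)
    show "qscale q x \<in> {v. c * v \<in> W}" if "x \<in> {v. c * v \<in> W}" for q x
    proof -
      have "c * qscale q x = qscale q (c * x)" by (simp add: qscale_def)
      then show ?thesis using that unfolding W_def by (simp add: Q.span_scale)
    qed
  qed
  have cG: "G \<subseteq> {v. c * v \<in> W}"
  proof
    fix v assume "v \<in> G"
    then obtain j where j: "j < d" "v = g j" unfolding G_def by auto
    show "v \<in> {v. c * v \<in> W}"
    proof (cases j)
      case 0
      have "c * v = qscale (1/2) (g 1 + g (1 - e))" using grec0 j 0 by (simp add: qscale_def of_rat_divide)
      moreover have "g 1 \<in> W" "g (1-e) \<in> W" using gW d1 by auto
      ultimately show ?thesis unfolding W_def by (simp add: Q.span_scale Q.span_add)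
    next
      case (Suc i)
      have "c * v = qscale (1/2) (g (i+2) + g i)" using grec[of i] j Suc by (simp add: qscale_def of_rat_divide)
      moreover have "g (i+2) \<in> W" "g i \<in> W" using gW Suc j by auto
      ultimately show ?thesis unfolding W_def by (simp add: Q.span_scale Q.span_add)
    qed
  qed
  have cW: "c * v \<in> W" if "v \<in> W" for v
    using Q.span_minimal[OF cG sub_c] that unfolding W_def by auto
  define M where "M = {y. \<forall>v\<in>W. y * v \<in> W}"
  have subM: "Q.subspace M"
  proof (rule Q.subspaceI)
    show "0 \<in> M" unfolding M_def W_def by (simp add: Q.span_zero)
    show "x + y \<in> M" if "x \<in> M" "y \<in> M" for x y
      using that unfolding M_def W_def by (simp add: distrib_right Q.span_add)
    show "qscale q x \<in> M" if "x \<in> M" for q x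
    proof -
      have "qscale q x * v = qscale q (x * v)" for v by (simp add: qscale_def)
      then show ?thesis using that unfolding M_def W_def by (simp add: Q.span_scale)
    qed
  qed
  have M1: "1 \<in> M" unfolding M_def by simp
  have Mc: "c * y \<in> M" if "y \<in> M" for y using that cW unfolding M_def by (simp add: mult.assoc)
  have Mdiff: "x - y \<in> M" if "x \<in> M" "y \<in> M" for x y
    using Q.subspace_diff[OF subM that] .
  have Mq: "qscale q x \<in> M" if "x \<in> M" for q x using subM that by (simp add: Q.subspace_def)
  have Mtwo: "2 * x \<in> M" if "x \<in> M" for x
    using Mq[OF that, of 2] by (simp add: qscale_def)
  have gM: "g j \<in> M \<and> g (j+1) \<in> M" for j
  proof (induction j)
    case 0
    have "g 1 = 2 * (c * g 0) - g (1 - e)" using grec0 by simp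
    moreover have "g (1 - e) \<in> M" using e01 g0 M1 Mc
    proof (cases "e = 0")
      case True
      then have "g (1 - e) = c * 1" using g0 grec0 by simp
      then show ?thesis using Mc[OF M1] by simp
    next
      case False then show ?thesis using e01 g0 M1 by auto
    qed
    moreover have "c \<in> M" using Mc[OF M1] by simp
    ultimately show ?case using g0 M1 Mtwo Mdiff by simp
  next
    case (Suc j)
    have "g (j+2) = 2 * (c * g (j+1)) - g j" using grec[of j] by simp
    then show ?case using Suc Mc Mtwo Mdiff by simp
  qed
  have WM: "W \<subseteq> M" unfolding W_def
    by (rule Q.span_minimal[OF _ subM]) (auto simp: G_def gM)
  have mulW: "x * y \<in> W" if "x \<in> W" "y \<in> W" for x y using WM that unfolding M_def by auto
  have oneW: "1 \<in> W" using gW[of 0] g0 by simp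
  have invW: "inverse w \<in> W" if "w \<in> W" "w \<noteq> 0" for w
    using inverse_in_span[OF finG] oneW mulW that unfolding W_def by blast
  have Wdiff: "x - y \<in> W" "x + y \<in> W" if "x \<in> W" "y \<in> W" for x y
    using that unfolding W_def by (auto simp: Q.span_diff Q.span_add)
  have W2: "2 * x \<in> W" if "x \<in> W" for x
    using Q.span_scale[of x G 2] that unfolding W_def by (simp add: qscale_def)
  define C where "C k = cos (2 * real k * \<theta>)" for k :: nat
  define U where "U k = sin (2 * real k * \<theta>) / sin (2 * \<theta>)" for k :: nat
  have s2: "sin (2 * \<theta>) > 0" using th0 th4 by (intro sin_gt_zero) auto
  have Crec: "C (k+2) = 2 * (c * C (k+1)) - C k" for k
  proof -
    have "c * C (k+1) = cos (2*\<theta>) * cos (2*real(k+1)*\<theta>)" by (simp add: c_def C_def)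
    also have "\<dots> = (cos (2*\<theta> - 2*real(k+1)*\<theta>) + cos (2*\<theta> + 2*real(k+1)*\<theta>))/2"
      by (rule cos_times_cos)
    also have "2*\<theta> - 2*real(k+1)*\<theta> = -(2*real k*\<theta>)" by (simp add: algebra_simps)
    also have "2*\<theta> + 2*real(k+1)*\<theta> = 2*real(k+2)*\<theta>" by (simp add: algebra_simps)
    finally have "c * C (k+1) = (C k + C (k+2))/2" unfolding C_def by simp
    then show ?thesis unfolding C_def by simp
  qed
  have Urec: "U (k+2) = 2 * (c * U (k+1)) - U k" for k
  proof -
    have "c * sin (2 * real (k+1) * \<theta>) = sin (2*real(k+1)*\<theta>) * cos (2*\<theta>)" by (simp add: c_def)
    also have "\<dots> = (sin (2*real(k+1)*\<theta> + 2*\<theta>) + sin (2*real(k+1)*\<theta> - 2*\<theta>))/2"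
      by (rule sin_times_cos)
    also have "2*real(k+1)*\<theta> - 2*\<theta> = 2*real k*\<theta>" by (simp add: algebra_simps)
    also have "2*real(k+1)*\<theta> + 2*\<theta> = 2*real(k+2)*\<theta>" by (simp add: algebra_simps)
    finally have *: "c * sin (2 * real (k+1) * \<theta>) = (sin (2*real(k+2)*\<theta>) + sin (2*real k*\<theta>))/2" .
    have "U (k+2) = (2 * (c * sin (2 * real (k+1) * \<theta>)) - sin (2*real k*\<theta>)) / sin (2*\<theta>)"
      unfolding * U_def by (simp add: field_simps)
    then show ?thesis unfolding U_def using s2 by (simp add: diff_divide_distrib)
  qed
  have CW: "C k \<in> W \<and> C (k+1) \<in> W" for k
  proof (induction k)
    case 0 then show ?case using oneW cW[OF oneW] by (simp add: C_def c_def)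
  next
    case (Suc k) then show ?case using Crec[of k] cW W2 Wdiff by simp
  qed
  have UW: "U k \<in> W \<and> U (k+1) \<in> W" for k
  proof (induction k)
    case 0 then show ?case using oneW s2 by (simp add: U_def W_def Q.span_zero)
  next
    case (Suc k) then show ?case using Urec[of k] cW W2 Wdiff by simp
  qed
  have SW: "{scale N k | k. 1 \<le> k \<and> k \<le> N div 2 - 1} \<subseteq> W"
  proof safe
    fix k assume k: "1 \<le> k" "k \<le> N div 2 - 1"
    have kn: "real k < real n" using k unfolding n_def by auto
    have kt0: "0 < real k * \<theta>" using k th0 by simp
    have kt1: "real k * \<theta> < pi/2" using kn nth th0 by (metis mult_strict_right_mono)
    have "sin (2 * real k * \<theta>) > 0" by (rule sin_gt_zero) (use kt0 kt1 in \<open>auto simp: mult.commute\<close>)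
    then have Uk: "U k > 0" unfolding U_def using s2 by simp
    have c1: "C 1 + 1 > 0" unfolding C_def using cos_ge_minus_one[of "2*\<theta>"] cos_ge_zero[of "2*\<theta>"] th0 th4 by simp
    have e1: "scale N k = (C k + 1) * inverse (C 1 + 1) * inverse (U k)"
    proof -
      have "scale N k = tan \<theta> / tan (real k * \<theta>)" unfolding scale_def \<theta>_def by simp
      also have "\<dots> = (sin (2*\<theta>) / (C 1 + 1)) / (sin (2 * (real k * \<theta>)) / (C k + 1))"
        unfolding C_def by (simp add: tan_half[of \<theta>] tan_half[of "real k * \<theta>"] mult.assoc)
      also have "\<dots> = (C k + 1) * inverse (C 1 + 1) * inverse (U k)"
        unfolding U_def using s2 by (simp add: field_simps mult.assoc)
      finally show ?thesis .
    qed
    have "C k + 1 \<in> W" "C 1 + 1 \<in> W" using CW[of k] CW[of 0] oneW Wdiff by auto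
    moreover have "U k \<in> W" using UW by auto
    ultimately show "scale N k \<in> W" unfolding e1 using invW mulW c1 Uk by simp
  qed
  have "Q.dim {scale N k | k. 1 \<le> k \<and> k \<le> N div 2 - 1} \<le> card G"
    by (rule Q.dim_le_card[OF _ finG]) (use SW in \<open>simp add: W_def\<close>)
  then show ?thesis using cardG unfolding qdim_eq d_def by simp
qed



lemma scale_pos:
  assumes "N \<ge> 4" "even N" "1 \<le> k" "k \<le> N div 2 - 1"
  shows "scale N k > 0"
proof -
  have "real k < real N / 2" using assms by auto
  then have a: "real k * pi / real N < pi/2" using assms by (simp add: field_simps)
  have b: "pi / real N < pi/2" using assms by (simp add: field_simps)
  have "0 < real k * pi / real N" using assms by simp
  then show ?thesis unfolding scale_def using a b assms
    by (intro divide_pos_pos tan_gt_zero) auto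
qed

lemma scale_pair:
  assumes N: "N \<ge> 4" "even N" and k: "1 \<le> k" "k \<le> N div 2 - 1"
  shows "scale N k * scale N (N div 2 - k) = tan (pi / real N) ^ 2"
proof -
  define n where "n = N div 2"
  have Nn: "real N = 2 * real n" using N unfolding n_def by auto
  have kn: "k < n" using k unfolding n_def by auto
  have ang: "real (n - k) * pi / real N = pi/2 - real k * pi / real N"
    using kn Nn N by (simp add: of_nat_diff field_simps)
  have tk: "tan (real k * pi / real N) > 0"
  proof -
    have "real k < real N / 2" using Nn kn by simp
    then have a: "real k * pi / real N < pi/2" using N by (simp add: field_simps)
    have "0 < real k * pi / real N" using k N by simp
    then show ?thesis using a by (intro tan_gt_zero) auto
  qed
  have "scale N (n - k) = tan (pi / real N) * tan (real k * pi / real N)"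
    unfolding scale_def ang tan_cot by (simp add: divide_inverse)
  then show ?thesis unfolding n_def[symmetric] scale_def using tk by (simp add: power2_eq_square)
qed

lemma gen_eq:
  assumes N: "N \<ge> 4" "even N"
  shows "GenScale N = tan (pi / real N) ^ 2"
proof -
  have "(N - 1) div 2 = N div 2 - 1" using N by (auto elim!: evenE)
  moreover have "N div 2 - (N div 2 - 1) = 1" using N by auto
  moreover have "tan (pi / real N) > 0"
  proof -
    have "pi / real N < pi/2" using N by (simp add: field_simps)
    then show ?thesis using tan_gt_zero[of "pi / real N"] N by simp
  qed
  then have "scale N 1 = 1" unfolding scale_def by simp
  ultimately show ?thesis unfolding GenScale_def
    using scale_pair[OF N, of 1] N by simp
qed

theorem lemma5:
  fixes N :: nat
  assumes "N \<ge> 4" and "even N"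
  shows
   "(\<forall>k. 1 \<le> k \<and> k \<le> N div 2 - 1 \<longrightarrow> scale N k * scale N (N div 2 - k) = GenScale N)
    \<and> real (qdim {scale N k | k. 1 \<le> k \<and> k \<le> N div 2 - 1}) \<le> real N / 4
    \<and> (N mod 4 = 2 \<longrightarrow>
         qdim {scale N k | k. 1 \<le> k \<and> k \<le> N div 2 - 1} \<le> nat \<lfloor>real N / 4\<rfloor>
         \<and> (\<forall>m. 1 \<le> 2 * m \<and> 2 * m \<le> N div 2 - 1 \<longrightarrow>
               scale N (2 * m) = GenScale N / scale N (N div 2 - 2 * m) \<and> odd (N div 2 - 2 * m)))
    \<and> (4 dvd N \<longrightarrow>
         scale N (N div 4) = sqrt (GenScale N)
         \<and> (\<forall>k. N div 4 < k \<and> k \<le> N div 2 - 1 \<longrightarrow> scale N k = GenScale N / scale N (N div 2 - k)))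
    \<and> (N \<ge> 6 \<longrightarrow>
         ScaleSwap N (N div 2) = scale N 2
         \<and> (\<forall>k. 1 \<le> k \<and> real k < real N / 4 \<longrightarrow>
               scale (N div 2) k = scale N (2 * k) / ScaleSwap N (N div 2)))"
proof -
  note N = assms
  have P1: "\<forall>k. 1 \<le> k \<and> k \<le> N div 2 - 1 \<longrightarrow> scale N k * scale N (N div 2 - k) = GenScale N"
    using scale_pair[OF N] gen_eq[OF N] by simp
  have D: "qdim {scale N k | k. 1 \<le> k \<and> k \<le> N div 2 - 1} \<le> N div 4" by (rule dim_bound[OF N])
  have fl: "nat \<lfloor>real N / 4\<rfloor> = N div 4"
  proof -
    have "real N / 4 = real N / real (4::nat)" by simp
    then have "\<lfloor>real N / 4\<rfloor> = int (N div 4)" using floor_divide_of_nat_eq[of N 4] by simp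
    then show ?thesis by simp
  qed
  have P2: "real (qdim {scale N k | k. 1 \<le> k \<and> k \<le> N div 2 - 1}) \<le> real N / 4"
  proof -
    have "4 * (N div 4) \<le> N" by simp
    then have "real (4 * (N div 4)) \<le> real N" by (simp only: of_nat_le_iff)
    then have "real (N div 4) \<le> real N / 4" by simp
    then show ?thesis using D by (meson of_nat_le_iff order_trans)
  qed
  have swap: "scale N k = GenScale N / scale N (N div 2 - k)" if "1 \<le> k" "k \<le> N div 2 - 1" for k
  proof -
    have "scale N (N div 2 - k) > 0" using scale_pos[OF N, of "N div 2 - k"] that by auto
    then show ?thesis using P1 that by (simp add: field_simps)
  qed
  have P3: "N mod 4 = 2 \<longrightarrow>
         qdim {scale N k | k. 1 \<le> k \<and> k \<le> N div 2 - 1} \<le> nat \<lfloor>real N / 4\<rfloor>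
         \<and> (\<forall>m. 1 \<le> 2 * m \<and> 2 * m \<le> N div 2 - 1 \<longrightarrow>
               scale N (2 * m) = GenScale N / scale N (N div 2 - 2 * m) \<and> odd (N div 2 - 2 * m))"
  proof
    assume m4: "N mod 4 = 2"
    have h2: "N div 2 = 2*(N div 4) + 1" using m4 by presburger
    have "odd (N div 2)" unfolding h2 by simp
    then show "qdim {scale N k | k. 1 \<le> k \<and> k \<le> N div 2 - 1} \<le> nat \<lfloor>real N / 4\<rfloor>
         \<and> (\<forall>m. 1 \<le> 2 * m \<and> 2 * m \<le> N div 2 - 1 \<longrightarrow>
               scale N (2 * m) = GenScale N / scale N (N div 2 - 2 * m) \<and> odd (N div 2 - 2 * m))"
    proof (intro conjI allI impI)
      show "qdim {scale N k | k. 1 \<le> k \<and> k \<le> N div 2 - 1} \<le> nat \<lfloor>real N / 4\<rfloor>"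
        using D fl by simp
      fix m assume m: "1 \<le> 2 * m \<and> 2 * m \<le> N div 2 - 1"
      then show "scale N (2 * m) = GenScale N / scale N (N div 2 - 2 * m)" using swap by blast
      have "N div 2 - 2 * m = 2 * (N div 4 - m) + 1" using m h2 by auto
      then show "odd (N div 2 - 2 * m)" by simp
    qed
  qed
  have P4: "4 dvd N \<longrightarrow>
         scale N (N div 4) = sqrt (GenScale N)
         \<and> (\<forall>k. N div 4 < k \<and> k \<le> N div 2 - 1 \<longrightarrow> scale N k = GenScale N / scale N (N div 2 - k))"
  proof
    assume d4: "4 dvd N"
    have k: "1 \<le> N div 4" "N div 4 \<le> N div 2 - 1" "N div 2 - N div 4 = N div 4" using d4 N by auto
    have "scale N (N div 4) ^ 2 = GenScale N" using P1 k by (metis power2_eq_square)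
    moreover have "scale N (N div 4) > 0" using scale_pos[OF N] k by auto
    ultimately have "scale N (N div 4) = sqrt (GenScale N)" by (metis less_eq_real_def real_sqrt_unique)
    moreover have "\<forall>k. N div 4 < k \<and> k \<le> N div 2 - 1 \<longrightarrow> scale N k = GenScale N / scale N (N div 2 - k)"
    proof (intro allI impI)
      fix k assume "N div 4 < k \<and> k \<le> N div 2 - 1"
      then show "scale N k = GenScale N / scale N (N div 2 - k)" using swap k(1) by simp
    qed
    ultimately show "scale N (N div 4) = sqrt (GenScale N)
         \<and> (\<forall>k. N div 4 < k \<and> k \<le> N div 2 - 1 \<longrightarrow> scale N k = GenScale N / scale N (N div 2 - k))" by (rule conjI)
  qed
  have P5: "N \<ge> 6 \<longrightarrow>
         ScaleSwap N (N div 2) = scale N 2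
         \<and> (\<forall>k. 1 \<le> k \<and> real k < real N / 4 \<longrightarrow>
               scale (N div 2) k = scale N (2 * k) / ScaleSwap N (N div 2))"
  proof
    assume "N \<ge> 6"
    have Nn: "real (N div 2) = real N / 2" using N by auto
    have a: "pi / real (N div 2) = 2 * pi / real N" unfolding Nn by simp
    have t0: "tan (pi / real N) \<noteq> 0"
    proof -
      have "pi / real N < pi/2" using N by (simp add: field_simps)
      then show ?thesis using tan_gt_zero[of "pi / real N"] N by simp
    qed
    have S: "ScaleSwap N (N div 2) = scale N 2" unfolding ScaleSwap_def scale_def a by simp
    have "scale (N div 2) k = scale N (2 * k) / ScaleSwap N (N div 2)" for k
    proof -
      have b: "real k * pi / real (N div 2) = real (2*k) * pi / real N" unfolding Nn by simp
      show ?thesis unfolding ScaleSwap_def scale_def a b using t0 by (simp add: field_simps)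
    qed
    then show "ScaleSwap N (N div 2) = scale N 2
         \<and> (\<forall>k. 1 \<le> k \<and> real k < real N / 4 \<longrightarrow>
               scale (N div 2) k = scale N (2 * k) / ScaleSwap N (N div 2))" using S by simp
  qed
  show ?thesis by (intro conjI P1 P2 P3 P4 P5)
qed

end
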